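(* Let $E$ be a pseudofinite virtual complex of positive admissible Hilbert space complexes and $r\ge0$. Suppose the $r$-th torsion of $E$ is defined, i.e. $\tau_0(E^{(i)})=1$ for $i=0,\dots,r-1$ (so that $E^{(r)}$ is pseudofinite). Then $$\tau_r(E)=\prod_{p=0}^\infty\det{}'(\Delta\,|\,E_p)^{(-1)^{p+r-1}\binom{p}{r}},$$ where the product is in fact finite.
   Context: For a positive admissible complex (Laplacians $\Delta_p=dd^*+d^*d|_{E_p}$ admissible off their kernels) $\det'(\Delta_p)$ is the zeta-regularized determinant of $\Delta_p$ on $(\ker\Delta_p)^\perp$. For a virtual complex $E=E_+-E_-$, $\det'(\Delta|E_k)=\det'(\Delta|(E_+)_k)/\det'(\Delta|(E_-)_k)$; $E$ is pseudofinite if $\det'(\Delta|E_k)=1$ for all large $k$, and then $\det'(\Delta|E)=\prod_k\det'(\Delta|E_k)^{(-1)^k}$ and $\tau_0(E)=\det'(\Delta|E)^{-1}$. The twist of $E$ is $E'=\sum_{k\ge0}(-1)^kE[-k]$ with $E[j]_k=E_{k+j}$ (degree-$j$ component $\sum_{k=0}^{j}(-1)^kE_{j-k}$); higher twists are $E^{(0)}=E$, $E^{(n+1)}=(E^{(n)})'$. If $\tau_0(E^{(i)})=1$ for $i<r$, the $r$-th torsion is $\tau_r(E)=\tau_0(E^{(r)})$. *)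

theory Defs
  imports "HOL-Analysis.Analysis"
begin

text \<open>
  A (positive) Laplacian restricted to the orthogonal complement of its
  kernel is recorded by its spectrum with multiplicities: a function
  m :: real => nat, m l = multiplicity of the eigenvalue l.  Direct sums of Hilbert
  spaces (with the direct-sum Laplacian) correspond to pointwise sums of multiplicity
  functions.  Zeta-regularised determinants depend only on this data.
\<close>

type_synonym spectrum = "real \<Rightarrow> nat"

definition spec_ok :: "spectrum \<Rightarrow> bool" where
  "spec_ok m \<longleftrightarrow> (\<forall>l. 0 < m l \<longrightarrow> 0 < l) \<and> (\<forall>c. finite {l. 0 < m l \<and> l \<le> c})"

definition zeta_cont :: "spectrum \<Rightarrow> (complex \<Rightarrow> complex) \<Rightarrow> complex set \<Rightarrow> bool" where
  "zeta_cont m f S \<longleftrightarrow> S sparse_in UNIV \<and> 0 \<notin> S \<and> f holomorphic_on (- S) \<and>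
     (\<exists>\<sigma>. \<forall>s. \<sigma> < Re s \<longrightarrow>
        ((\<lambda>l. of_nat (m l) * (complex_of_real l) powr (- s)) has_sum f s) {l. 0 < m l})"

definition admissible :: "spectrum \<Rightarrow> bool" where
  "admissible m \<longleftrightarrow> spec_ok m \<and> (\<exists>f S. zeta_cont m f S)"

definition det' :: "spectrum \<Rightarrow> real" where
  "det' m = exp (- Re (deriv (SOME f. \<exists>S. zeta_cont m f S) 0))"

text \<open>A virtual complex E = E_+ - E_-: degree p components of E_+ and E_-.\<close>
type_synonym vcomplex = "(nat \<Rightarrow> spectrum) \<times> (nat \<Rightarrow> spectrum)"

definition pos_admissible :: "vcomplex \<Rightarrow> bool" where
  "pos_admissible E \<longleftrightarrow> (\<forall>p. admissible (fst E p) \<and> admissible (snd E p))"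

definition vdet :: "vcomplex \<Rightarrow> nat \<Rightarrow> real" where
  "vdet E k = det' (fst E k) / det' (snd E k)"

definition pseudofinite :: "vcomplex \<Rightarrow> bool" where
  "pseudofinite E \<longleftrightarrow> (\<exists>N. \<forall>k\<ge>N. vdet E k = 1)"

definition detE :: "vcomplex \<Rightarrow> real" where
  "detE E = (let N = (LEAST N. \<forall>k\<ge>N. vdet E k = 1)
             in \<Prod>k<N. vdet E k powi ((-1) ^ k))"

definition tau0 :: "vcomplex \<Rightarrow> real" where
  "tau0 E = inverse (detE E)"

text \<open>Twist E' = sum_k (-1)^k E[-k]; degree j component sum_{k=0}^j (-1)^k E_{j-k}.
  The sign (-1)^k exchanges the positive and negative parts.\<close>
definition twist :: "vcomplex \<Rightarrow> vcomplex" where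
  "twist E =
    ((\<lambda>j l. (\<Sum>k\<in>{k. k \<le> j \<and> even k}. fst E (j - k) l) + (\<Sum>k\<in>{k. k \<le> j \<and> odd k}. snd E (j - k) l)),
     (\<lambda>j l. (\<Sum>k\<in>{k. k \<le> j \<and> even k}. snd E (j - k) l) + (\<Sum>k\<in>{k. k \<le> j \<and> odd k}. fst E (j - k) l)))"

definition higher_twist :: "nat \<Rightarrow> vcomplex \<Rightarrow> vcomplex" where
  "higher_twist n E = (twist ^^ n) E"

definition tau :: "nat \<Rightarrow> vcomplex \<Rightarrow> real" where
  "tau r E = tau0 (higher_twist r E)"

end

theory Submission
  imports Defs "HOL-Complex_Analysis.Complex_Analysis"
begin


lemma zeta_cont_deriv_unique:
  assumes "zeta_cont m f S" "zeta_cont m g T"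
  shows "deriv f 0 = deriv g 0"
proof -
  from assms(1) obtain s1 where s1: "\<And>s. s1 < Re s \<Longrightarrow>
        ((\<lambda>l. of_nat (m l) * (complex_of_real l) powr (- s)) has_sum f s) {l. 0 < m l}"
    and Ssp: "S sparse_in UNIV" and S0: "0 \<notin> S" and hf: "f holomorphic_on (- S)"
    unfolding zeta_cont_def by blast
  from assms(2) obtain s2 where s2: "\<And>s. s2 < Re s \<Longrightarrow>
        ((\<lambda>l. of_nat (m l) * (complex_of_real l) powr (- s)) has_sum g s) {l. 0 < m l}"
    and Tsp: "T sparse_in UNIV" and T0: "0 \<notin> T" and hg: "g holomorphic_on (- T)"
    unfolding zeta_cont_def by blast
  define U where "U = S \<union> T"
  have Usp: "U sparse_in UNIV" unfolding U_def using Ssp Tsp by (rule sparse_in_union')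
  have Ucl: "closed U" using Usp by (rule sparse_in_UNIV_imp_closed)
  have oU: "open (- U)" using Ucl by auto
  have cU: "connected (- U)"
    using sparse_imp_connected[of UNIV U] Usp by (simp add: Compl_eq_Diff_UNIV connected_UNIV)
  define H where "H = {s::complex. Re s > max s1 s2}"
  have oH: "open H" unfolding H_def by (rule open_halfspace_Re_gt)
  have ne: "H \<inter> - U \<noteq> {}"
  proof
    assume e: "H \<inter> - U = {}"
    define x where "x = complex_of_real (max s1 s2 + 1)"
    have xH: "x \<in> H" unfolding H_def x_def by (simp add: max_def)
    have "x islimpt H" using oH xH by (intro interior_limit_point) (auto simp: interior_open)
    then have "x islimpt U" using e by (meson disjoint_iff_not_equal islimpt_subset subsetI ComplI)
    moreover from Usp obtain B where "x \<in> B" "open B" "\<forall>y\<in>B. \<not> y islimpt U"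
      unfolding sparse_in_def by blast
    ultimately show False by blast
  qed
  have eq: "f z = g z" if "z \<in> - U" for z
  proof (rule analytic_continuation_open[of "H \<inter> - U" "- U" f g z])
    show "open (H \<inter> - U)" using oH oU by auto
    show "f holomorphic_on - U" using hf by (rule holomorphic_on_subset) (auto simp: U_def)
    show "g holomorphic_on - U" using hg by (rule holomorphic_on_subset) (auto simp: U_def)
    show "f w = g w" if "w \<in> H \<inter> - U" for w
      using s1[of w] s2[of w] that has_sum_unique unfolding H_def by auto
  qed (use ne cU oU that in auto)
  have "eventually (\<lambda>z. f z = g z) (nhds 0)"
  proof -
    have "0 \<in> - U" using S0 T0 unfolding U_def by auto
    from eventually_nhds_in_open[OF oU this] show ?thesis
      by (rule eventually_mono) (rule eq)
  qed
  then show ?thesis by (rule deriv_cong_ev) simp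
qed

lemma det'_eq:
  assumes "zeta_cont m f S"
  shows "det' m = exp (- Re (deriv f 0))"
proof -
  have "\<exists>S. zeta_cont m (SOME f. \<exists>S. zeta_cont m f S) S"
    using someI_ex[of "\<lambda>f. \<exists>S. zeta_cont m f S"] assms by blast
  then obtain T where "zeta_cont m (SOME f. \<exists>S. zeta_cont m f S) T" by blast
  from zeta_cont_deriv_unique[OF this assms] show ?thesis unfolding det'_def by simp
qed

lemma zeta_cont_add:
  assumes "zeta_cont m1 f1 S1" "zeta_cont m2 f2 S2"
  shows "zeta_cont (\<lambda>l. m1 l + m2 l) (\<lambda>s. f1 s + f2 s) (S1 \<union> S2)"
proof -
  from assms(1) obtain s1 where s1: "\<And>s. s1 < Re s \<Longrightarrow>
        ((\<lambda>l. of_nat (m1 l) * (complex_of_real l) powr (- s)) has_sum f1 s) {l. 0 < m1 l}"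
    and Ssp: "S1 sparse_in UNIV" and S0: "0 \<notin> S1" and hf: "f1 holomorphic_on (- S1)"
    unfolding zeta_cont_def by blast
  from assms(2) obtain s2 where s2: "\<And>s. s2 < Re s \<Longrightarrow>
        ((\<lambda>l. of_nat (m2 l) * (complex_of_real l) powr (- s)) has_sum f2 s) {l. 0 < m2 l}"
    and Tsp: "S2 sparse_in UNIV" and T0: "0 \<notin> S2" and hg: "f2 holomorphic_on (- S2)"
    unfolding zeta_cont_def by blast
  have "((\<lambda>l. of_nat (m1 l + m2 l) * (complex_of_real l) powr (- s)) has_sum (f1 s + f2 s))
          {l. 0 < m1 l + m2 l}" if "max s1 s2 < Re s" for s
  proof -
    have a: "((\<lambda>l. of_nat (m1 l) * (complex_of_real l) powr (- s)) has_sum f1 s) {l. 0 < m1 l + m2 l}"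
      by (subst has_sum_cong_neutral[where T="{l. 0 < m1 l}"]) (use s1 that in auto)
    have b: "((\<lambda>l. of_nat (m2 l) * (complex_of_real l) powr (- s)) has_sum f2 s) {l. 0 < m1 l + m2 l}"
      by (subst has_sum_cong_neutral[where T="{l. 0 < m2 l}"]) (use s2 that in auto)
    show ?thesis using has_sum_add[OF a b] by (simp add: distrib_right)
  qed
  moreover have "(\<lambda>s. f1 s + f2 s) holomorphic_on - (S1 \<union> S2)"
    by (intro holomorphic_intros holomorphic_on_subset[OF hf] holomorphic_on_subset[OF hg]) auto
  ultimately show ?thesis unfolding zeta_cont_def using Ssp Tsp S0 T0
    by (auto intro!: sparse_in_union' exI[of _ "max s1 s2"])
qed

lemma zeta_cont_zero: "zeta_cont (\<lambda>l. 0) (\<lambda>s. 0) {}"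
  unfolding zeta_cont_def by auto

lemma admissible_add:
  assumes "admissible m1" "admissible m2"
  shows "admissible (\<lambda>l. m1 l + m2 l) \<and> det' (\<lambda>l. m1 l + m2 l) = det' m1 * det' m2"
proof -
  from assms obtain f1 S1 f2 S2 where z1: "zeta_cont m1 f1 S1" and z2: "zeta_cont m2 f2 S2"
    unfolding admissible_def by blast
  have z: "zeta_cont (\<lambda>l. m1 l + m2 l) (\<lambda>s. f1 s + f2 s) (S1 \<union> S2)" by (rule zeta_cont_add[OF z1 z2])
  have d1: "f1 field_differentiable at 0"
    using z1 unfolding zeta_cont_def
    by (meson ComplI holomorphic_on_imp_differentiable_at open_Compl sparse_in_UNIV_imp_closed)
  have d2: "f2 field_differentiable at 0"
    using z2 unfolding zeta_cont_def
    by (meson ComplI holomorphic_on_imp_differentiable_at open_Compl sparse_in_UNIV_imp_closed)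
  have "spec_ok (\<lambda>l. m1 l + m2 l)"
  proof -
    have "{l. 0 < m1 l + m2 l \<and> l \<le> c} = {l. 0 < m1 l \<and> l \<le> c} \<union> {l. 0 < m2 l \<and> l \<le> c}" for c
      by auto
    then show ?thesis using assms unfolding admissible_def spec_ok_def by auto
  qed
  then have "admissible (\<lambda>l. m1 l + m2 l)" using z unfolding admissible_def by blast
  moreover have "det' (\<lambda>l. m1 l + m2 l) = det' m1 * det' m2"
    unfolding det'_eq[OF z] det'_eq[OF z1] det'_eq[OF z2] using d1 d2
    by (simp add: exp_add[symmetric])
  ultimately show ?thesis by blast
qed

lemma admissible_zero: "admissible (\<lambda>l. 0) \<and> det' (\<lambda>l. 0) = 1"
  using det'_eq[OF zeta_cont_zero] zeta_cont_zero unfolding admissible_def spec_ok_def by auto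

lemma admissible_sum:
  assumes "finite A" "\<And>k. k \<in> A \<Longrightarrow> admissible (m k)"
  shows "admissible (\<lambda>l. \<Sum>k\<in>A. m k l) \<and> det' (\<lambda>l. \<Sum>k\<in>A. m k l) = (\<Prod>k\<in>A. det' (m k))"
  using assms
proof (induction A rule: finite_induct)
  case empty then show ?case using admissible_zero by simp
next
  case (insert x F)
  then show ?case using admissible_add[of "m x" "\<lambda>l. \<Sum>k\<in>F. m k l"] by simp
qed



definition tw :: "(nat \<Rightarrow> real) \<Rightarrow> nat \<Rightarrow> real" where
  "tw a j = (\<Sum>k\<le>j. (-1)^k * a (j - k))"

definition altS :: "(nat \<Rightarrow> real) \<Rightarrow> nat \<Rightarrow> real" where
  "altS a M = (\<Sum>k<M. (-1)^k * a k)"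

lemma tw_0: "tw a 0 = a 0" by (simp add: tw_def)

lemma tw_Suc: "tw a (Suc j) = a (Suc j) - tw a j"
  unfolding tw_def by (subst sum.atMost_Suc_shift) (simp add: sum_negf)

lemma tw_altS: "tw a j = (-1)^j * altS a (Suc j)"
  by (induction j) (simp_all add: tw_0 tw_Suc altS_def algebra_simps)

lemma altS_ext: assumes "\<forall>k\<ge>N. a k = 0" "M \<ge> N" shows "altS a M = altS a N"
  using assms(2)
proof (induction M rule: dec_induct)
  case base then show ?case by simp
next
  case (step m) then show ?case using assms(1) by (simp add: altS_def)
qed

lemma supp_tw:
  assumes "\<forall>k\<ge>N. a k = 0" "altS a N = 0"
  shows "\<forall>k\<ge>N. tw a k = 0"
proof (intro allI impI)
  fix k assume k: "N \<le> k"
  have "altS a (Suc k) = altS a N" by (rule altS_ext[OF assms(1)]) (use k in simp)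
  then show "tw a k = 0" using assms(2) by (simp add: tw_altS)
qed

lemma IDL:
  assumes "a 0 = b 0" "\<And>j. a (Suc j) = b (Suc j) + b j"
  shows "(\<Sum>p<M. (-1)^(p+Suc r) * real (p choose Suc r) * a p) =
         (\<Sum>p<M. (-1)^(p+r) * real (p choose r) * b p) + (-1)^(M+r) * real (M choose Suc r) * b (M-1)"
proof (induction M)
  case 0 then show ?case by simp
next
  case (Suc M)
  show ?case
  proof (cases M)
    case 0
    then show ?thesis using assms(1) by (cases r) simp_all
  next
    case (Suc m)
    have pas: "real (Suc M choose Suc r) = real (M choose r) + real (M choose Suc r)"
      by simp
    define X :: real where "X = (-1)^(m+r)"
    have p1: "(-1::real)^(Suc m + r) = - X" "(-1::real)^(Suc (Suc m) + r) = X"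
      "(-1::real)^(Suc m + Suc r) = X" by (simp_all add: X_def)
    have IH: "(\<Sum>p<Suc m. (-1)^(p+Suc r) * real (p choose Suc r) * a p) =
         (\<Sum>p<Suc m. (-1)^(p+r) * real (p choose r) * b p) - X * real (Suc m choose Suc r) * b m"
      using Suc.IH unfolding Suc p1 by simp
    have pas: "real (Suc (Suc m) choose Suc r) = real (Suc m choose r) + real (Suc m choose Suc r)"
      by simp
    show ?thesis unfolding Suc
      apply (simp only: sum.lessThan_Suc[of _ "Suc m"] IH p1 assms(2) diff_Suc_1 pas)
      apply (simp add: algebra_simps)
      done
  qed
qed

lemma ALG:
  "(\<forall>i\<le>r. \<forall>k\<ge>N. (tw^^i) a k = 0) \<Longrightarrow> (\<forall>i<r. altS ((tw^^i) a) N = 0) \<Longrightarrow> M \<ge> N \<Longrightarrow>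
   altS ((tw^^r) a) M = (\<Sum>p<M. (-1)^(p+r) * real (p choose r) * a p)"
proof (induction r arbitrary: a M)
  case 0 then show ?case by (simp add: altS_def)
next
  case (Suc r)
  define b where "b = tw a"
  have e: "(tw^^i) b = (tw^^Suc i) a" for i
    unfolding b_def by (simp add: funpow_Suc_right del: funpow.simps)
  have IH: "altS ((tw^^r) b) M = (\<Sum>p<M. (-1)^(p+r) * real (p choose r) * b p)"
    using Suc.prems by (intro Suc.IH) (auto simp: e)
  have a0: "\<forall>k\<ge>N. a k = 0" using Suc.prems(1) by (metis funpow_0 le0)
  have S0: "altS a N = 0" using Suc.prems(2) by (metis funpow_0 zero_less_Suc)
  have bz: "real (M choose Suc r) * b (M-1) = 0"
  proof (cases M)
    case 0 then show ?thesis by simp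
  next
    case (Suc m)
    have "b m = (-1)^m * altS a (Suc m)" unfolding b_def by (rule tw_altS)
    also have "altS a (Suc m) = 0" using altS_ext[OF a0, of "Suc m"] Suc Suc.prems(3) S0 by simp
    finally show ?thesis using Suc by simp
  qed
  have "altS ((tw^^Suc r) a) M = altS ((tw^^r) b) M" by (simp only: e)
  also have "\<dots> = (\<Sum>p<M. (-1)^(p+Suc r) * real (p choose Suc r) * a p)"
    unfolding IH using IDL[of a b, where M=M and r=r] bz
    by (simp add: b_def tw_0 tw_Suc)
  finally show ?case .
qed



definition lv :: "vcomplex \<Rightarrow> nat \<Rightarrow> real" where "lv E k = ln (vdet E k)"

lemma det'_pos: "det' m > 0" by (simp add: det'_def)

lemma det'_nz[simp]: "det' m \<noteq> 0" using det'_pos[of m] by simp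

lemma vdet_pos: "vdet E k > 0" by (simp add: vdet_def det'_pos)

lemma vdet_exp: "vdet E k = exp (lv E k)" by (simp add: lv_def vdet_pos)

lemma powi_exp: "(x::real) > 0 \<Longrightarrow> x powi n = exp (of_int n * ln x)"
  using powr_real_of_int'[of x n] by (simp add: powr_def)

lemma twist_lv:
  assumes "pos_admissible E"
  shows "pos_admissible (twist E) \<and> lv (twist E) = tw (lv E)"
proof -
  define A where "A j = {k. k \<le> j \<and> even k}" for j :: nat
  define B where "B j = {k. k \<le> j \<and> odd k}" for j :: nat
  have fA: "finite (A j)" "finite (B j)" for j unfolding A_def B_def by auto
  have ad: "admissible (fst E p)" "admissible (snd E p)" for p
    using assms unfolding pos_admissible_def by auto
  have sA: "admissible (\<lambda>l. \<Sum>k\<in>A j. fst E (j - k) l) \<and>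
      det' (\<lambda>l. \<Sum>k\<in>A j. fst E (j - k) l) = (\<Prod>k\<in>A j. det' (fst E (j - k)))"
    "admissible (\<lambda>l. \<Sum>k\<in>B j. fst E (j - k) l) \<and>
      det' (\<lambda>l. \<Sum>k\<in>B j. fst E (j - k) l) = (\<Prod>k\<in>B j. det' (fst E (j - k)))"
    "admissible (\<lambda>l. \<Sum>k\<in>A j. snd E (j - k) l) \<and>
      det' (\<lambda>l. \<Sum>k\<in>A j. snd E (j - k) l) = (\<Prod>k\<in>A j. det' (snd E (j - k)))"
    "admissible (\<lambda>l. \<Sum>k\<in>B j. snd E (j - k) l) \<and>
      det' (\<lambda>l. \<Sum>k\<in>B j. snd E (j - k) l) = (\<Prod>k\<in>B j. det' (snd E (j - k)))" for j
    by (intro admissible_sum fA ad)+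
  have tf: "fst (twist E) j = (\<lambda>l. (\<Sum>k\<in>A j. fst E (j - k) l) + (\<Sum>k\<in>B j. snd E (j - k) l))"
   and ts: "snd (twist E) j = (\<lambda>l. (\<Sum>k\<in>A j. snd E (j - k) l) + (\<Sum>k\<in>B j. fst E (j - k) l))" for j
    unfolding twist_def A_def B_def by simp_all
  have adf: "admissible (fst (twist E) j)" and df: "det' (fst (twist E) j) =
      (\<Prod>k\<in>A j. det' (fst E (j - k))) * (\<Prod>k\<in>B j. det' (snd E (j - k)))" for j
    unfolding tf using admissible_add[OF conjunct1[OF sA(1)] conjunct1[OF sA(4)]] sA by auto
  have ads: "admissible (snd (twist E) j)" and ds: "det' (snd (twist E) j) =
      (\<Prod>k\<in>A j. det' (snd E (j - k))) * (\<Prod>k\<in>B j. det' (fst E (j - k)))" for j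
    unfolding ts using admissible_add[OF conjunct1[OF sA(3)] conjunct1[OF sA(2)]] sA by auto
  have "pos_admissible (twist E)" unfolding pos_admissible_def using adf ads by auto
  moreover have "lv (twist E) j = tw (lv E) j" for j
  proof -
    have ld: "ln (det' m) = - Re (deriv (SOME f. \<exists>S. zeta_cont m f S) 0)" for m
      by (simp add: det'_def)
    have lvE: "lv E p = ln (det' (fst E p)) - ln (det' (snd E p))" for p
      unfolding lv_def vdet_def using det'_pos[of "fst E p"] det'_pos[of "snd E p"] by (simp add: ln_div)
    have "lv (twist E) j = (\<Sum>k\<in>A j. lv E (j - k)) - (\<Sum>k\<in>B j. lv E (j - k))"
      unfolding lv_def vdet_def df ds lvE
      by (simp add: ln_div ln_mult det'_pos prod_pos ln_prod fA sum_subtractf algebra_simps)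
    also have "\<dots> = tw (lv E) j"
    proof -
      have "tw (lv E) j = (\<Sum>k\<in>{..j}. if even k then lv E (j - k) else - lv E (j - k))"
        unfolding tw_def by (intro sum.cong) auto
      also have "\<dots> = (\<Sum>k\<in>A j. lv E (j - k)) + (\<Sum>k\<in>B j. - lv E (j - k))"
        unfolding sum.If_cases[OF finite_atMost] A_def B_def
        by (intro arg_cong2[where f="(+)"] sum.cong) auto
      finally show ?thesis by (simp add: sum_negf)
    qed
    finally show ?thesis .
  qed
  ultimately show ?thesis by auto
qed

lemma ht_lv:
  assumes "pos_admissible E"
  shows "pos_admissible (higher_twist i E) \<and> lv (higher_twist i E) = (tw^^i) (lv E)"
proof (induction i)
  case 0 then show ?case using assms by (simp add: higher_twist_def)
next
  case (Suc i)
  have "higher_twist (Suc i) E = twist (higher_twist i E)" by (simp add: higher_twist_def)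
  then show ?case using twist_lv[of "higher_twist i E"] Suc.IH by simp
qed

lemma detE_val:
  assumes "\<forall>k\<ge>N. lv E k = 0"
  shows "detE E = exp (altS (lv E) N)"
proof -
  have v1: "\<forall>k\<ge>N. vdet E k = 1" using assms by (simp add: vdet_exp)
  define L where "L = (LEAST N. \<forall>k\<ge>N. vdet E k = 1)"
  have LN: "L \<le> N" unfolding L_def using v1 by (rule Least_le)
  have L1: "\<forall>k\<ge>L. vdet E k = 1" unfolding L_def using v1 by (rule LeastI)
  have "detE E = (\<Prod>k<L. vdet E k powi ((-1) ^ k))" unfolding detE_def L_def by simp
  also have "\<dots> = (\<Prod>k<N. vdet E k powi ((-1) ^ k))"
    by (rule prod.mono_neutral_left) (use LN L1 in auto)
  also have "\<dots> = (\<Prod>k<N. exp ((-1)^k * lv E k))"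
    by (intro prod.cong refl) (simp add: powi_exp vdet_pos lv_def)
  also have "\<dots> = exp (altS (lv E) N)" by (simp add: altS_def exp_sum)
  finally show ?thesis .
qed

lemma tau0_val:
  assumes "\<forall>k\<ge>N. lv E k = 0"
  shows "tau0 E = exp (- altS (lv E) N)"
  unfolding tau0_def detE_val[OF assms] by (simp add: exp_minus)

theorem proposition2p2p2:
  fixes E :: vcomplex and r :: nat
  assumes "pos_admissible E"
    and "pseudofinite E"
    and "\<forall>i<r. tau0 (higher_twist i E) = 1"
  shows "\<exists>N. \<forall>M\<ge>N. \<forall>p\<ge>N. vdet E p = 1 \<and>
           tau r E = (\<Prod>p<M. vdet E p powi ((-1) ^ (p + r + 1) * int (p choose r)))"
proof -
  from assms(2) obtain N where N: "\<forall>k\<ge>N. vdet E k = 1" unfolding pseudofinite_def by blast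
  define a where "a = lv E"
  have ht: "lv (higher_twist i E) = (tw^^i) a" for i using ht_lv[OF assms(1)] a_def by blast
  have supp: "\<forall>k\<ge>N. (tw^^i) a k = 0" if "i \<le> r" for i
    using that
  proof (induction i)
    case 0 then show ?case using N by (simp add: a_def lv_def)
  next
    case (Suc i)
    then have s: "\<forall>k\<ge>N. (tw^^i) a k = 0" by simp
    have "tau0 (higher_twist i E) = 1" using assms(3) Suc.prems by simp
    then have "altS ((tw^^i) a) N = 0" using tau0_val[of N "higher_twist i E"] s ht by simp
    then show ?case using supp_tw[OF s] by simp
  qed
  have alt0: "altS ((tw^^i) a) N = 0" if "i < r" for i
  proof -
    have s: "\<forall>k\<ge>N. (tw^^i) a k = 0" using supp that by simp
    have "tau0 (higher_twist i E) = 1" using assms(3) that by simp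
    then show ?thesis using tau0_val[of N "higher_twist i E"] s ht by simp
  qed
  show ?thesis
  proof (intro exI allI impI conjI)
    fix M p assume M: "N \<le> M" and p: "N \<le> p"
    show "vdet E p = 1" using N p by simp
    have sr: "\<forall>k\<ge>N. (tw^^r) a k = 0" using supp by simp
    have "tau r E = exp (- altS ((tw^^r) a) N)"
      unfolding tau_def using tau0_val[of N "higher_twist r E"] sr ht by simp
    also have "altS ((tw^^r) a) N = altS ((tw^^r) a) M" using altS_ext[OF sr M] by simp
    also have "\<dots> = (\<Sum>p<M. (-1)^(p+r) * real (p choose r) * a p)"
      using ALG[of r N a M] supp alt0 M by blast
    also have "exp (- (\<Sum>p<M. (-1)^(p+r) * real (p choose r) * a p)) =
        (\<Prod>p<M. vdet E p powi ((-1) ^ (p + r + 1) * int (p choose r)))"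
    proof -
      have "exp (- (\<Sum>p<M. (-1)^(p+r) * real (p choose r) * a p)) =
          (\<Prod>p<M. exp (- ((-1)^(p+r) * real (p choose r) * a p)))"
        by (subst sum_negf[symmetric], subst exp_sum) simp_all
      also have "\<dots> = (\<Prod>p<M. vdet E p powi ((-1) ^ (p + r + 1) * int (p choose r)))"
        by (intro prod.cong refl) (simp add: powi_exp vdet_pos a_def lv_def)
      finally show ?thesis .
    qed
    finally show "tau r E = (\<Prod>p<M. vdet E p powi ((-1) ^ (p + r + 1) * int (p choose r)))" .
  qed
qed


end
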